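(* Let $z_1,\ldots,z_N$ be i.i.d. uniform on the unit circle and $P(z)=\prod_{i=1}^N(z-z_i)$. Let $\gamma=\log\big(\cos(\pi/8)/\sin(\pi/8)\big)$. Then for every $\epsilon\in(0,1)$ and all sufficiently large $N$, $$\mathbb{P}\Big(\max_{|z|=1}|P(z)|^2\ge\exp\big(\gamma\sqrt\pi\,\epsilon\sqrt N/2\big)\Big)\ge1-\epsilon.$$ *)

theory Defs
  imports "HOL-Probability.Probability"
begin

definition unif_circle :: "complex measure" where
  "unif_circle = distr (uniform_measure lborel {0..<2*pi}) borel cis"

definition circle_points :: "nat \<Rightarrow> (nat \<Rightarrow> complex) measure" where
  "circle_points N = PiM {..<N} (\<lambda>_. unif_circle)"

definition rpoly :: "nat \<Rightarrow> (nat \<Rightarrow> complex) \<Rightarrow> complex \<Rightarrow> complex" where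
  "rpoly N z w = (\<Prod>i<N. w - z i)"

definition gamma_const :: real where
  "gamma_const = ln (cos (pi/8) / sin (pi/8))"

end

theory Submission
  imports Defs "HOL-Library.Real_Mod" "HOL-Computational_Algebra.Fundamental_Theorem_Algebra"
begin


lemma root_unity_sum:
  assumes m: "m > 0"
  shows "(\<Sum>j<m. cis (2*pi/m) ^ (j*k)) = (if m dvd k then of_nat m else 0)"
proof (cases "m dvd k")
  case True
  then obtain t where k: "k = m * t" by blast
  have "cis (2*pi/m) ^ (j*k) = 1" for j
  proof -
    have "cis (2*pi/m) ^ (j*k) = cis (real (j*k) * (2*pi/m))" by (rule Complex.DeMoivre)
    also have "real (j*k) * (2*pi/m) = 2*pi* real (j*t)" using m by (simp add: k field_simps)
    also have "cis (2*pi*real (j*t)) = 1" by (rule cis_multiple_2pi) (simp add: Ints_of_nat)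
    finally show ?thesis .
  qed
  then show ?thesis using True by simp
next
  case False
  let ?x = "cis (2*pi/m) ^ k"
  have x1: "?x \<noteq> 1"
  proof
    assume "?x = 1"
    then have "cis (real k * (2*pi/m)) = 1" by (simp add: Complex.DeMoivre)
    then obtain n where n: "real k * (2*pi/m) = of_int n * (2*pi)" by (auto simp: cis_eq_1_iff)
    then have "real k = of_int n * real m" using m by (simp add: field_simps)
    then have "int k = n * int m" by (metis of_int_eq_iff of_int_mult of_int_of_nat_eq)
    then have "int m dvd int k" by simp
    then show False using False by simp
  qed
  have xm: "?x ^ m = 1"
  proof -
    have "?x ^ m = cis (2*pi* real k)" using m by (simp add: Complex.DeMoivre power_mult[symmetric] field_simps)
    also have "\<dots> = 1" by (rule cis_multiple_2pi) (simp add: Ints_of_nat)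
    finally show ?thesis .
  qed
  have "(\<Sum>j<m. cis (2*pi/m) ^ (j*k)) = (\<Sum>j<m. ?x ^ j)"
    by (simp add: power_mult[symmetric] mult.commute)
  also have "\<dots> = 0" using x1 xm by (simp add: geometric_sum)
  finally show ?thesis using False by simp
qed

lemma poly_mean_value:
  fixes p :: "complex poly"
  assumes m: "degree p < m"
  shows "(\<Sum>j<m. poly p (a + d * cis (2*pi/m) ^ j)) = of_nat m * poly p a"
proof -
  define q where "q = offset_poly p a"
  have dq: "degree q < m" using m by (simp add: q_def)
  have m0: "m > 0" using m by simp
  have "(\<Sum>j<m. poly p (a + d * cis (2*pi/m) ^ j)) = (\<Sum>j<m. poly q (d * cis (2*pi/m) ^ j))"
    by (simp add: q_def poly_offset_poly)
  also have "\<dots> = (\<Sum>j<m. \<Sum>i\<le>degree q. coeff q i * d ^ i * cis (2*pi/m) ^ (j*i))"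
    by (simp add: poly_altdef power_mult_distrib power_mult[symmetric] mult.commute mult.left_commute mult.assoc)
  also have "\<dots> = (\<Sum>i\<le>degree q. coeff q i * d ^ i * (\<Sum>j<m. cis (2*pi/m) ^ (j*i)))"
    by (subst sum.swap) (simp add: sum_distrib_left)
  also have "\<dots> = (\<Sum>i\<le>degree q. coeff q i * d ^ i * (if i = 0 then of_nat m else 0))"
  proof (rule sum.cong[OF refl])
    fix i assume "i \<in> {..degree q}"
    then have "i < m" using dq by simp
    then have "m dvd i \<longleftrightarrow> i = 0" by (auto dest: dvd_imp_le)
    then show "coeff q i * d ^ i * (\<Sum>j<m. cis (2*pi/m) ^ (j*i)) = coeff q i * d ^ i * (if i = 0 then of_nat m else 0)"
      using root_unity_sum[OF m0, of i] by simp
  qed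
  also have "\<dots> = coeff q 0 * of_nat m"
    by (simp add: sum.delta' if_distrib cong: if_cong)
  also have "coeff q 0 = poly p a" by (simp add: q_def poly_0_coeff_0[symmetric] poly_offset_poly)
  finally show ?thesis by simp
qed

lemma poly_max_modulus:
  fixes p :: "complex poly"
  shows "\<exists>w. cmod w = 1 \<and> (\<forall>v. cmod v \<le> 1 \<longrightarrow> cmod (poly p v) \<le> cmod (poly p w))"
proof -
  have "\<exists>x\<in>cball 0 1. \<forall>y\<in>cball 0 1. cmod (poly p y) \<le> cmod (poly p x)"
    by (intro continuous_attains_sup) (auto intro!: continuous_intros)
  then obtain a where a1: "cmod a \<le> 1" and amax: "\<And>y. cmod y \<le> 1 \<Longrightarrow> cmod (poly p y) \<le> cmod (poly p a)"
    by auto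
  show ?thesis
  proof (cases "cmod a = 1")
    case True then show ?thesis using amax by blast
  next
    case False
    define \<delta> where "\<delta> = 1 - cmod a"
    have \<delta>: "\<delta> > 0" using a1 False by (simp add: \<delta>_def)
    define \<rho> where "\<rho> = (if a = 0 then 1 else sgn a)"
    have \<rho>1: "cmod \<rho> = 1" by (simp add: \<rho>_def norm_sgn)
    define m where "m = Suc (degree p)"
    define pt where "pt j = a + (of_real \<delta> * \<rho>) * cis (2*pi/m) ^ j" for j
    have ptin: "cmod (pt j) \<le> 1" for j
    proof -
      have "cmod (pt j) \<le> cmod a + cmod (of_real \<delta> * \<rho> * cis (2*pi/m) ^ j)"
        unfolding pt_def by (rule norm_triangle_ineq)
      also have "\<dots> = cmod a + \<delta>" using \<delta> \<rho>1 by (simp add: norm_mult norm_power)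
      finally show ?thesis by (simp add: \<delta>_def)
    qed
    have mv: "(\<Sum>j<m. poly p (pt j)) = of_nat m * poly p a"
      unfolding pt_def by (rule poly_mean_value) (simp add: m_def)
    have "real m * cmod (poly p a) = cmod (\<Sum>j<m. poly p (pt j))"
      by (simp add: mv norm_mult)
    also have "\<dots> \<le> (\<Sum>j<m. cmod (poly p (pt j)))" by (rule norm_sum)
    finally have le: "real m * cmod (poly p a) \<le> (\<Sum>j<m. cmod (poly p (pt j)))" .
    have "(\<Sum>j<m. cmod (poly p a) - cmod (poly p (pt j))) = 0"
    proof -
      have "(\<Sum>j<m. cmod (poly p a) - cmod (poly p (pt j))) \<le> 0"
        using le by (simp add: sum_subtractf)
      moreover have "(\<Sum>j<m. cmod (poly p a) - cmod (poly p (pt j))) \<ge> 0"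
        by (intro sum_nonneg) (simp add: amax ptin)
      ultimately show ?thesis by linarith
    qed
    then have "\<forall>j\<in>{..<m}. cmod (poly p a) - cmod (poly p (pt j)) = 0"
      by (subst (asm) sum_nonneg_eq_0_iff) (auto simp: amax ptin)
    moreover have "(0::nat) \<in> {..<m}" by (simp add: m_def)
    ultimately have "cmod (poly p a) - cmod (poly p (pt 0)) = 0" by blast
    then have eq0: "cmod (poly p (pt 0)) = cmod (poly p a)" by linarith
    have "cmod (pt 0) = 1"
    proof (cases "a = 0")
      case True then show ?thesis using \<delta> by (simp add: pt_def \<rho>_def \<delta>_def)
    next
      case F: False
      have sg: "sgn a = a / of_real (cmod a)"
        by (simp add: sgn_div_norm divide_inverse scaleR_conv_of_real mult.commute)
      have "pt 0 = of_real (cmod a + \<delta>) * sgn a"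
        using F by (simp add: pt_def \<rho>_def sg field_simps)
      then show ?thesis using F \<delta> by (simp add: norm_mult \<delta>_def norm_sgn)
    qed
    then show ?thesis using eq0 amax by (intro exI[of _ "pt 0"]) auto
  qed
qed

lemma cos_as_roots:
  assumes m: "m > 0"
  shows "complex_of_real (cos (2*pi*j/m)) = (cis (2*pi/m) ^ j + cis (2*pi/m) ^ (j*(m-1))) / 2"
proof -
  have a: "cis (2*pi/m) ^ j = cis (2*pi*j/m)"
    by (subst Complex.DeMoivre) (simp add: field_simps)
  have "cis (2*pi/m) ^ (j*(m-1)) = cis (real (j*(m-1)) * (2*pi/m))"
    by (rule Complex.DeMoivre)
  also have "real (j*(m-1)) * (2*pi/m) = 2*pi*real j + (- (2*pi*j/m))"
    using m by (simp add: of_nat_diff field_simps)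
  also have "cis \<dots> = cis (2*pi*real j) * cis (- (2*pi*j/m))"
    by (rule cis_mult[symmetric])
  also have "cis (2*pi*real j) = 1" by (rule cis_multiple_2pi) (simp add: Ints_of_nat)
  finally have b: "cis (2*pi/m) ^ (j*(m-1)) = cis (- (2*pi*j/m))" by simp
  show ?thesis unfolding a b by (simp add: complex_eq_iff)
qed

lemma weights_sum:
  fixes m :: nat
  assumes m: "m \<ge> 2"
  shows "(\<Sum>j<m. 1 + s * cos (2*pi*real j/real m)) = real m"
proof -
  have m0: "m > 0" using m by simp
  have "complex_of_real (\<Sum>j<m. cos (2*pi*j/m))
      = (\<Sum>j<m. cis (2*pi/m) ^ (j*1) + cis (2*pi/m) ^ (j*(m-1))) / 2"
    by (simp add: cos_as_roots[OF m0] sum_divide_distrib)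
  also have "\<dots> = 0"
  proof -
    have "\<not> m dvd 1" "\<not> m dvd (m-1)" using m by (auto dest: dvd_imp_le)
    then have "(\<Sum>j<m. cis (2*pi/m) ^ (j*1)) = 0" "(\<Sum>j<m. cis (2*pi/m) ^ (j*(m-1))) = 0"
      using root_unity_sum[OF m0, of 1] root_unity_sum[OF m0, of "m-1"] by simp_all
    then show ?thesis by (simp only: sum.distrib) simp
  qed
  finally have "(\<Sum>j<m. cos (2*pi*j/m)) = 0" by (simp only: of_real_eq_0_iff)
  then show ?thesis by (simp add: sum.distrib sum_distrib_left[symmetric])
qed

lemma div_le_self_real: "0 \<le> (x::real) \<Longrightarrow> 1 \<le> d \<Longrightarrow> x / d \<le> x"
  by (simp add: divide_le_eq) (metis mult_left_mono mult.right_neutral)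

lemma weighted_log:
  fixes y :: complex and s u :: real and m :: nat
  assumes m: "m \<ge> 3" and u: "0 \<le> u" "u < 1" and yu: "cmod y \<le> u^2" and s: "\<bar>s\<bar> \<le> 1"
  shows "\<bar>(\<Sum>j<m. (1 + s * cos (2*pi*j/m)) * ln (cmod (1 - cis (2*pi/m) ^ j * y))) + real m * s * Re y / 2\<bar>
          \<le> 2 * m * u^(m-1) / (1 - u)"
proof -
  have m0: "m > 0" using m by simp
  define \<omega> where "\<omega> = cis (2*pi/m)"
  define w where "w j = 1 + s * cos (2*pi*j/m)" for j :: nat
  define E where "E n = real m * (if m dvd n then 1 else 0) + s * m / 2 * ((if m dvd (n+1) then 1 else 0) + (if m dvd (n+(m-1)) then 1 else 0))" for n :: nat
  define t where "t n = - E n * Re (y^n) / real n" for n :: nat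
  have nw: "cmod (\<omega>^j) = 1" for j by (simp add: \<omega>_def norm_power)
  have y1: "cmod y < 1" using yu u by (smt (verit) power_le_one_iff power2_eq_square mult_left_le_one_le)
  have wy1: "cmod (\<omega>^j * y) < 1" for j using y1 by (simp add: norm_mult nw)
  have ser: "(\<lambda>n. - Re ((\<omega>^j * y)^n) / real n) sums ln (cmod (1 - \<omega>^j * y))" for j
  proof -
    have "(\<lambda>n. - ((-(-(\<omega>^j * y)))^n) / of_nat n) sums ln (1 + (-(\<omega>^j * y)))"
      by (rule Ln_series') (use wy1 in simp)
    from sums_Re[OF this] have "(\<lambda>n. Re (- ((\<omega>^j * y)^n) / of_nat n)) sums Re (ln (1 - \<omega>^j * y))"
      by simp
    moreover have "1 - \<omega>^j * y \<noteq> 0" using wy1[of j] by auto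
    ultimately show ?thesis by simp
  qed
  have ser2: "(\<lambda>n. \<Sum>j<m. w j * (- Re ((\<omega>^j * y)^n) / real n)) sums (\<Sum>j<m. w j * ln (cmod (1 - \<omega>^j * y)))"
    by (intro sums_sum sums_mult ser)
  have Eeq: "(\<Sum>j<m. complex_of_real (w j) * \<omega>^(j*n)) = complex_of_real (E n)" for n
  proof -
    have "(\<Sum>j<m. complex_of_real (w j) * \<omega>^(j*n))
        = (\<Sum>j<m. \<omega>^(j*n) + of_real s / 2 * (\<omega>^(j*(n+1)) + \<omega>^(j*(n+(m-1)))))"
    proof (intro sum.cong refl)
      fix j
      have a: "complex_of_real (w j) = 1 + of_real s * (\<omega>^j + \<omega>^(j*(m-1))) / 2"
        by (simp add: w_def cos_as_roots[OF m0] \<omega>_def)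
      have b: "\<omega>^(j*(n+1)) = \<omega>^(j*n) * \<omega>^j" by (simp add: power_add)
      have c: "\<omega>^(j*(n+(m-1))) = \<omega>^(j*n) * \<omega>^(j*(m-1))" by (simp add: add_mult_distrib2 power_add)
      show "complex_of_real (w j) * \<omega>^(j*n) = \<omega>^(j*n) + of_real s / 2 * (\<omega>^(j*(n+1)) + \<omega>^(j*(n+(m-1))))"
        unfolding a b c by (simp add: field_simps)
    qed
    also have "\<dots> = (\<Sum>j<m. \<omega>^(j*n)) + of_real s / 2 * ((\<Sum>j<m. \<omega>^(j*(n+1))) + (\<Sum>j<m. \<omega>^(j*(n+(m-1)))))"
      by (simp only: sum.distrib sum_distrib_left[symmetric])
    also have "\<dots> = complex_of_real (E n)"
      unfolding \<omega>_def root_unity_sum[OF m0] E_def by simp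
    finally show ?thesis .
  qed
  have teq: "(\<Sum>j<m. w j * (- Re ((\<omega>^j * y)^n) / real n)) = t n" for n
  proof -
    have e1: "(\<omega>^j * y)^n = \<omega>^(j*n) * y^n" for j by (simp add: power_mult_distrib power_mult)
    have "(\<Sum>j<m. w j * (- Re ((\<omega>^j * y)^n) / real n)) = - (\<Sum>j<m. w j * Re (\<omega>^(j*n) * y^n)) / real n"
      by (simp add: e1 sum_divide_distrib sum_negf del: times_complex.sel)
    also have "(\<Sum>j<m. w j * Re (\<omega>^(j*n) * y^n)) = Re (\<Sum>j<m. complex_of_real (w j) * (\<omega>^(j*n) * y^n))"
      by (simp add: Re_sum)
    also have "(\<Sum>j<m. complex_of_real (w j) * (\<omega>^(j*n) * y^n)) = (\<Sum>j<m. complex_of_real (w j) * \<omega>^(j*n)) * y^n"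
      by (simp add: sum_distrib_right mult.assoc)
    also have "- Re ((\<Sum>j<m. complex_of_real (w j) * \<omega>^(j*n)) * y^n) / real n = t n" by (simp add: Eeq t_def)
    finally show ?thesis .
  qed
  have tsum: "t sums (\<Sum>j<m. w j * ln (cmod (1 - \<omega>^j * y)))"
    using ser2 unfolding ext[of "\<lambda>n. \<Sum>j<m. w j * (- Re ((\<omega>^j * y)^n) / real n)" t, OF teq] .
  define L where "L = (\<Sum>j<m. w j * ln (cmod (1 - \<omega>^j * y)))"
  have t0: "t 0 = 0" by (simp add: t_def)
  have t1: "t 1 = - (real m * s / 2) * Re y"
  proof -
    have "\<not> m dvd 1" "\<not> m dvd Suc (Suc 0)" using m by (auto dest: dvd_imp_le)
    moreover have "m dvd (1 + (m-1))" using m by simp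
    ultimately show ?thesis by (simp add: t_def E_def)
  qed
  have tail: "(\<lambda>i. t (i+2)) sums (L - t 1)"
    using sums_split_initial_segment[OF tsum[folded L_def], of 2] by (simp add: t0 numeral_2_eq_2)
  have Ebound: "\<bar>E n\<bar> \<le> 2 * m" for n
    using s m by (auto simp: E_def abs_mult intro!: order.trans[OF abs_triangle_ineq])
  have tb: "\<bar>t (i+2)\<bar> \<le> 2*m*u^(m-1) * u^(i+2)" for i
  proof (cases "E (i+2) = 0")
    case True then show ?thesis using u by (simp add: t_def)
  next
    case False
    have ge: "i + 2 \<ge> m - 1"
    proof (rule ccontr)
      assume "\<not> ?thesis"
      then have lt: "i + 2 < m - 1" by simp
      have "\<not> m dvd (i+2)" using lt by (auto dest: dvd_imp_le)
      moreover have "\<not> m dvd (i+2+1)" using lt by (auto dest: dvd_imp_le)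
      moreover have "\<not> m dvd (i+2+(m-1))"
      proof
        assume "m dvd (i+2+(m-1))"
        then obtain c where c: "i+2+(m-1) = m * c" by blast
        have "c \<noteq> 0" using c by (cases c) auto
        moreover have "c \<noteq> 1" using c lt by auto
        ultimately have "c \<ge> 2" by simp
        then have "m * c \<ge> m * 2" by simp
        then show False using c lt m by arith
      qed
      ultimately have "E (i+2) = 0" by (simp add: E_def)
      then show False using False by simp
    qed
    have "\<bar>t (i+2)\<bar> = \<bar>E (i+2)\<bar> * \<bar>Re (y^(i+2))\<bar> / real (i+2)"
      by (simp add: t_def abs_mult)
    also have "\<dots> \<le> \<bar>E (i+2)\<bar> * \<bar>Re (y^(i+2))\<bar>"
      by (rule div_le_self_real) auto
    also have "\<dots> \<le> 2*m * cmod y ^ (i+2)"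
    proof (intro mult_mono Ebound)
      show "\<bar>Re (y^(i+2))\<bar> \<le> cmod y ^ (i+2)"
        using abs_Re_le_cmod[of "y^(i+2)"] by (simp only: norm_power)
    qed auto
    also have "2*m * cmod y ^ (i+2) \<le> 2*m*u^(m-1) * u^(i+2)"
    proof -
      have "cmod y ^ (i+2) \<le> (u^2)^(i+2)" by (intro power_mono yu) simp
      also have "(u^2)^(i+2) = u^(i+2) * u^(i+2)" by (simp add: power_mult[symmetric] power2_eq_square power_mult_distrib)
      also have "\<dots> \<le> u^(m-1) * u^(i+2)"
        by (intro mult_right_mono power_decreasing ge) (use u in auto)
      finally show ?thesis by (simp add: mult.assoc mult_left_mono)
    qed
    finally show ?thesis .
  qed
  have gs: "(\<lambda>i. 2*m*u^(m-1) * u^(i+2)) sums (2*m*u^(m-1) * (u^2 / (1 - u)))"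
  proof -
    have "(\<lambda>i. u^i) sums (1 / (1 - u))" using u by (intro geometric_sums) simp
    from sums_mult[OF this, of "2*m*u^(m-1)*u^2"] show ?thesis
      by (simp add: power_add mult_ac power2_eq_square)
  qed
  have "\<bar>L - t 1\<bar> \<le> 2*m*u^(m-1) * (u^2 / (1 - u))"
  proof -
    have sg: "summable (\<lambda>i. 2*m*u^(m-1) * u^(i+2))" using gs by (rule sums_summable)
    have sa: "summable (\<lambda>i. \<bar>t (i+2)\<bar>)"
      by (rule summable_comparison_test'[OF sg]) (use tb in auto)
    have "\<bar>L - t 1\<bar> = \<bar>\<Sum>i. t (i+2)\<bar>" using tail by (simp add: sums_iff)
    also have "\<dots> \<le> (\<Sum>i. \<bar>t (i+2)\<bar>)" using summable_norm[of "\<lambda>i. t (i+2)"] sa by simp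
    also have "\<dots> \<le> (\<Sum>i. 2*m*u^(m-1) * u^(i+2))" by (intro suminf_le tb sa sg)
    also have "\<dots> = 2*m*u^(m-1) * (u^2 / (1 - u))" using gs by (simp add: sums_iff)
    finally show ?thesis .
  qed
  also have "\<dots> \<le> 2*m*u^(m-1) / (1 - u)"
  proof -
    have "u^2/(1-u) \<le> 1/(1-u)" using u by (intro divide_right_mono) (auto simp: power_le_one)
    then have "2*m*u^(m-1) * (u^2/(1-u)) \<le> 2*m*u^(m-1) * (1/(1-u))"
      by (rule mult_left_mono) (use u in simp)
    then show ?thesis by simp
  qed
  finally show ?thesis unfolding L_def w_def \<omega>_def t1 by (simp add: algebra_simps)
qed

lemma det_bound:
  fixes z :: "nat \<Rightarrow> complex" and N m :: nat and u :: real
  assumes z1: "\<forall>i<N. cmod (z i) = 1" and u: "0 \<le> u" "u < 1" and m: "m \<ge> 3"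
    and err: "real N * (2 * u^(m-1) / (1 - u)) \<le> 1"
  shows "\<exists>w. cmod w = 1 \<and> exp (u^2 * \<bar>\<Sum>i<N. Re (z i)\<bar> - 2) \<le> (cmod (rpoly N z w))\<^sup>2"
proof -
  define r where "r = u^2"
  have r: "0 \<le> r" "r < 1" using u by (auto simp: r_def power2_eq_square mult_le_one intro: le_less_trans[OF mult_right_le_one_le])
  define q where "q = (\<Prod>i<N. [:1, - z i:])"
  have polyq: "poly q v = (\<Prod>i<N. 1 - v * z i)" for v by (simp add: q_def poly_prod)
  define \<omega> where "\<omega> = cis (2*pi/m)"
  define p1 where "p1 = (\<Sum>i<N. Re (z i))"
  define s :: real where "s = (if p1 \<ge> 0 then -1 else 1)"
  have s: "\<bar>s\<bar> \<le> 1" "- s * p1 = \<bar>p1\<bar>" by (auto simp: s_def)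
  define w where "w j = 1 + s * cos (2*pi*real j/real m)" for j :: nat
  have w0: "w j \<ge> 0" for j
  proof -
    have "\<bar>s * cos (2*pi*real j/real m)\<bar> \<le> 1"
      using s(1) abs_cos_le_one[of "2*pi*real j/real m"] by (simp add: abs_mult mult_le_one)
    then show ?thesis by (simp add: w_def)
  qed
  have wsum: "(\<Sum>j<m. w j) = real m" unfolding w_def by (rule weights_sum) (use m in simp)
  define a where "a j = ln (cmod (poly q (of_real r * \<omega>^j)))" for j
  have nz: "1 - \<omega>^j * (of_real r * z i) \<noteq> 0" if "i < N" for i j
  proof -
    have "cmod (\<omega>^j * (of_real r * z i)) = r" using z1 that r by (simp add: norm_mult norm_power \<omega>_def)
    then show ?thesis using r by auto
  qed
  have aeq: "a j = (\<Sum>i<N. ln (cmod (1 - \<omega>^j * (of_real r * z i))))" for j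
  proof -
    have "cmod (poly q (of_real r * \<omega>^j)) = (\<Prod>i<N. cmod (1 - \<omega>^j * (of_real r * z i)))"
      by (simp add: polyq prod_norm mult_ac)
    then show ?thesis unfolding a_def
      by (simp only:) (rule ln_prod, simp, use nz in force)
  qed
  define B where "B = 2 * real m * u^(m-1) / (1 - u)"
  have each: "(\<Sum>j<m. w j * ln (cmod (1 - \<omega>^j * (of_real r * z i)))) \<ge> - (real m * s * (r * Re (z i)) / 2) - B"
    if "i < N" for i
  proof -
    have "cmod (of_real r * z i) \<le> u^2" using z1 that r by (simp add: norm_mult r_def norm_power)
    from weighted_log[OF m u this s(1)] show ?thesis
      unfolding w_def \<omega>_def B_def by (simp add: abs_le_iff)
  qed
  have "(\<Sum>j<m. w j * a j) = (\<Sum>i<N. \<Sum>j<m. w j * ln (cmod (1 - \<omega>^j * (of_real r * z i))))"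
    by (simp add: aeq sum_distrib_left sum.swap[of _ "{..<m}"])
  also have "\<dots> \<ge> (\<Sum>i<N. - (real m * s * (r * Re (z i)) / 2) - B)"
    by (intro sum_mono each) simp
  also have "(\<Sum>i<N. - (real m * s * (r * Re (z i)) / 2) - B) = real m * r * \<bar>p1\<bar> / 2 - N * B"
  proof -
    have "(\<Sum>i<N. - (real m * s * (r * Re (z i)) / 2) - B) = (real m * r / 2) * (- s * p1) - N * B"
      by (simp add: sum_subtractf p1_def sum_distrib_left algebra_simps)
    moreover have "(real m * r / 2) * (- s * p1) = real m * r * \<bar>p1\<bar> / 2" unfolding s(2) by simp
    ultimately show ?thesis by simp
  qed
  finally have low: "real m * r * \<bar>p1\<bar> / 2 - N * B \<le> (\<Sum>j<m. w j * a j)" .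
  define A where "A = Max (a ` {..<m})"
  have "(\<Sum>j<m. w j * a j) \<le> (\<Sum>j<m. w j * A)"
    by (intro sum_mono mult_left_mono w0) (auto simp: A_def)
  also have "\<dots> = real m * A" using wsum by (simp add: sum_distrib_right[symmetric])
  finally have "real m * r * \<bar>p1\<bar> / 2 - N * B \<le> real m * A" using low by linarith
  then have "r * \<bar>p1\<bar> / 2 - N * B / m \<le> A" using m by (simp add: field_simps)
  moreover have "N * B / m \<le> 1" using err m by (simp add: B_def)
  ultimately have Alow: "r * \<bar>p1\<bar> / 2 - 1 \<le> A" by linarith
  have "A \<in> a ` {..<m}" unfolding A_def using m by (intro Max_in) (auto simp: lessThan_empty_iff)
  then obtain j0 where j0: "a j0 = A" by auto
  obtain w0 where w01: "cmod w0 = 1" and wmax: "\<And>v. cmod v \<le> 1 \<Longrightarrow> cmod (poly q v) \<le> cmod (poly q w0)"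
    using poly_max_modulus[of q] by blast
  have pos: "cmod (poly q (of_real r * \<omega>^j0)) > 0"
    using nz by (simp add: polyq mult_ac)
  have "exp A = cmod (poly q (of_real r * \<omega>^j0))" using j0 pos unfolding a_def by (metis exp_ln)
  also have "\<dots> \<le> cmod (poly q w0)" using r by (intro wmax) (simp add: norm_mult norm_power \<omega>_def)
  also have "cmod (poly q w0) = cmod (rpoly N z (cnj w0))"
  proof -
    have "1 - w0 * z i = w0 * (cnj w0 - z i)" for i
      using w01 by (simp add: algebra_simps complex_norm_square[symmetric])
    then have "cmod (poly q w0) = (\<Prod>i<N. cmod w0 * cmod (cnj w0 - z i))"
      by (simp add: polyq prod_norm[symmetric] norm_mult)
    also have "\<dots> = cmod (rpoly N z (cnj w0))" using w01 by (simp add: rpoly_def prod_norm)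
    finally show ?thesis .
  qed
  finally have e: "exp A \<le> cmod (rpoly N z (cnj w0))" .
  have "exp (u^2 * \<bar>p1\<bar> - 2) = (exp (r * \<bar>p1\<bar> / 2 - 1))\<^sup>2"
    by (simp add: r_def power2_eq_square exp_add[symmetric])
  also have "\<dots> \<le> (exp A)\<^sup>2" using Alow by (intro power_mono) auto
  also have "\<dots> \<le> (cmod (rpoly N z (cnj w0)))\<^sup>2" using e by (intro power_mono) auto
  finally show ?thesis using w01 unfolding p1_def by (intro exI[of _ "cnj w0"]) auto
qed



lemma rpoly_bound: "(cmod (rpoly N z w))\<^sup>2 \<le> (\<Prod>i<N. 1 + cmod (z i))\<^sup>2" if "cmod w = 1"
proof -
  have "cmod (rpoly N z w) = (\<Prod>i<N. cmod (w - z i))" by (simp add: rpoly_def prod_norm)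
  also have "\<dots> \<le> (\<Prod>i<N. 1 + cmod (z i))"
  proof (intro prod_mono conjI)
    fix i show "cmod (w - z i) \<le> 1 + cmod (z i)" using norm_triangle_ineq4[of w "z i"] that by simp
  qed simp
  finally show ?thesis by (intro power_mono) auto
qed

lemma bdd_rpoly: "bdd_above ((\<lambda>w. (cmod (rpoly N z w))\<^sup>2) ` {w. cmod w = 1})"
  using rpoly_bound by (intro bdd_aboveI[of _ "(\<Prod>i<N. 1 + cmod (z i))\<^sup>2"]) auto

lemma sup_bound:
  fixes z :: "nat \<Rightarrow> complex" and u :: real
  assumes z1: "\<forall>i<N. cmod (z i) = 1" and u: "0 \<le> u" "u < 1"
  shows "exp (u^2 * \<bar>\<Sum>i<N. Re (z i)\<bar> - 2) \<le> (SUP w\<in>{w. cmod w = 1}. (cmod (rpoly N z w))\<^sup>2)"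
proof -
  have "(\<lambda>n. u^n) \<longlonglongrightarrow> 0" using u by (intro LIMSEQ_power_zero) simp
  moreover have "(1 - u) / (2 * real N + 2) > 0" using u by simp
  ultimately have "eventually (\<lambda>n. u^n < (1 - u) / (2 * real N + 2)) sequentially"
    by (rule order_tendstoD)
  then obtain M where M: "\<And>n. n \<ge> M \<Longrightarrow> u^n < (1 - u) / (2 * real N + 2)"
    by (auto simp: eventually_sequentially)
  define m where "m = M + 3"
  have m: "m \<ge> 3" by (simp add: m_def)
  have um: "u^(m-1) < (1 - u) / (2 * real N + 2)" by (intro M) (simp add: m_def)
  have "real N * (2 * u^(m-1) / (1 - u)) \<le> 1"
  proof -
    have "real N * (2 * u^(m-1)) \<le> (2 * real N + 2) * u^(m-1)" using u by (simp add: algebra_simps)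
    also have "\<dots> \<le> 1 - u" using um u by (simp add: field_simps)
    finally show ?thesis using u by (simp add: field_simps)
  qed
  from det_bound[OF z1 u m this] obtain w where w: "cmod w = 1"
    and le: "exp (u^2 * \<bar>\<Sum>i<N. Re (z i)\<bar> - 2) \<le> (cmod (rpoly N z w))\<^sup>2" by blast
  have "(cmod (rpoly N z w))\<^sup>2 \<le> (SUP w\<in>{w. cmod w = 1}. (cmod (rpoly N z w))\<^sup>2)"
    using w by (intro cSUP_upper bdd_rpoly) simp
  with le show ?thesis by linarith
qed



lemma sets_circle_points[measurable_cong]: "sets (circle_points N) = sets (PiM {..<N} (\<lambda>_. borel))"
  unfolding circle_points_def unif_circle_def by (intro sets_PiM_cong) auto

lemma meas_rpoly[measurable]: "(\<lambda>z. (cmod (rpoly N z w))\<^sup>2) \<in> borel_measurable (circle_points N)"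
  unfolding rpoly_def by measurable

lemma sup_char:
  "e \<le> (SUP w\<in>{w. cmod w = 1}. (cmod (rpoly N z w))\<^sup>2) \<longleftrightarrow>
   (\<forall>k::nat. \<exists>q\<in>\<rat>. e - 1 / (real k + 1) < (cmod (rpoly N z (cis q)))\<^sup>2)"
  (is "e \<le> ?S \<longleftrightarrow> _")
proof
  let ?f = "\<lambda>w. (cmod (rpoly N z w))\<^sup>2"
  have ne: "{w::complex. cmod w = 1} \<noteq> {}" by (auto intro!: exI[of _ 1])
  assume e: "e \<le> ?S"
  show "\<forall>k::nat. \<exists>q\<in>\<rat>. e - 1 / (real k + 1) < ?f (cis q)"
  proof
    fix k :: nat
    define \<delta> where "\<delta> = 1 / (real k + 1)"
    have \<delta>: "\<delta> > 0" by (simp add: \<delta>_def)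
    have "e - \<delta>/2 < ?S" using e \<delta> by linarith
    then obtain w where w: "cmod w = 1" "e - \<delta>/2 < ?f w"
      using less_cSUP_iff[OF ne bdd_rpoly] by auto
    define \<theta> where "\<theta> = Arg w"
    have "w \<noteq> 0" using w by auto
    then have "sgn w = cis \<theta>" using Arg_correct[of w] by (simp add: \<theta>_def)
    then have wc: "w = cis \<theta>" using w by (simp add: sgn_div_norm)
    define g where "g t = ?f (cis t)" for t
    have cg: "continuous_on UNIV g" unfolding g_def rpoly_def by (intro continuous_intros)
    have "open {t. g t > e - \<delta>}" using cg by (intro open_Collect_less) (auto intro: continuous_intros)
    moreover have "\<theta> \<in> {t. g t > e - \<delta>}" using w wc \<delta> by (simp add: g_def)
    ultimately obtain \<eta> where \<eta>: "\<eta> > 0" "ball (\<theta>) \<eta> \<subseteq> {t. g t > e - \<delta>}"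
      by (meson openE)
    obtain q where q: "q \<in> \<rat>" "\<theta> < q" "q < \<theta> + \<eta>" using Rats_dense_in_real[of "\<theta>" "\<theta> + \<eta>"] \<eta> by auto
    have "q \<in> ball (\<theta>) \<eta>" using q by (simp add: dist_real_def)
    then have "g q > e - \<delta>" using \<eta> by auto
    then show "\<exists>q\<in>\<rat>. e - 1 / (real k + 1) < ?f (cis q)" using q by (auto simp: g_def \<delta>_def)
  qed
next
  assume H: "\<forall>k::nat. \<exists>q\<in>\<rat>. e - 1 / (real k + 1) < (cmod (rpoly N z (cis q)))\<^sup>2"
  show "e \<le> ?S"
  proof (rule ccontr)
    assume "\<not> e \<le> ?S"
    then have "e - ?S > 0" by simp
    then obtain k :: nat where k: "1 / (real k + 1) < e - ?S"
      by (metis nat_approx_posE of_nat_Suc add.commute)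
    from H obtain q where "e - 1 / (real k + 1) < (cmod (rpoly N z (cis q)))\<^sup>2" by blast
    moreover have "(cmod (rpoly N z (cis q)))\<^sup>2 \<le> ?S" by (intro cSUP_upper bdd_rpoly) simp
    ultimately show False using k by linarith
  qed
qed

lemma sets_event: "{z \<in> space (circle_points N). e \<le> (SUP w\<in>{w. cmod w = 1}. (cmod (rpoly N z w))\<^sup>2)}
   \<in> sets (circle_points N)"
proof -
  have eq: "{z \<in> space (circle_points N). e \<le> (SUP w\<in>{w. cmod w = 1}. (cmod (rpoly N z w))\<^sup>2)}
    = space (circle_points N) \<inter> (\<Inter>k. \<Union>q\<in>\<rat>. {z \<in> space (circle_points N). e - 1 / (real k + 1) < (cmod (rpoly N z (cis q)))\<^sup>2})"
    by (auto simp: sup_char)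
  have each: "{z \<in> space (circle_points N). e - 1 / (real k + 1) < (cmod (rpoly N z (cis q)))\<^sup>2} \<in> sets (circle_points N)" for k q
    by measurable
  have un: "(\<Union>q\<in>\<rat>. {z \<in> space (circle_points N). e - 1 / (real k + 1) < (cmod (rpoly N z (cis q)))\<^sup>2}) \<in> sets (circle_points N)" for k
    by (rule sets.countable_UN'[OF countable_rat]) (auto intro: each)
  show ?thesis unfolding eq
    by (intro sets.Int sets.top sets.countable_INT') (auto intro: un)
qed



definition U0 :: "real measure" where "U0 = uniform_measure lborel {0..<2*pi}"

lemma U0_density: "U0 = density lborel (\<lambda>t. ennreal (indicator {0..2*pi} t / (2*pi)))"
proof -
  have "U0 = density lborel (\<lambda>t. indicator {0..<2*pi} t / emeasure lborel {0..<2*pi})"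
    by (simp add: U0_def uniform_measure_def)
  also have "\<dots> = density lborel (\<lambda>t. ennreal (indicator {0..2*pi} t / (2*pi)))"
  proof (rule density_cong)
    show "AE t in lborel. indicator {0..<2*pi} t / emeasure lborel {0..<2*pi} = ennreal (indicator {0..2*pi} t / (2*pi))"
      using AE_lborel_singleton[of "2*pi"]
    proof eventually_elim
      case (elim t)
      have "emeasure lborel {0..<2*pi} = ennreal (2*pi)" by simp
      then show ?case using elim
        by (auto simp: indicator_def divide_ennreal[symmetric] ennreal_indicator[symmetric])
    qed
  qed auto
  finally show ?thesis .
qed

lemma prob_U0: "prob_space U0"
  unfolding U0_def by (rule prob_space_uniform_measure) auto

lemma sets_U0[measurable_cong]: "sets U0 = sets borel" by (simp add: U0_def)

lemma cis_meas[measurable]: "cis \<in> borel_measurable borel"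
  by (intro borel_measurable_continuous_onI continuous_intros)

lemma prob_unif_circle: "prob_space unif_circle"
  unfolding unif_circle_def U0_def[symmetric] by (intro prob_space.prob_space_distr prob_U0) simp

lemma integral_U0:
  fixes g :: "real \<Rightarrow> real"
  assumes c: "continuous_on UNIV g" and I: "(g has_integral I) {0..2*pi}"
  shows "integral\<^sup>L U0 g = I / (2*pi)"
proof -
  have gm[measurable]: "g \<in> borel_measurable borel" using c by (rule borel_measurable_continuous_onI)
  have "integral\<^sup>L U0 g = integral\<^sup>L lborel (\<lambda>t. (indicator {0..2*pi} t / (2*pi)) *\<^sub>R g t)"
    unfolding U0_density by (rule integral_density) (auto simp: gm)
  also have "\<dots> = integral\<^sup>L lborel (\<lambda>t. indicator {0..2*pi} t *\<^sub>R g t) / (2*pi)"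
  proof -
    have "(\<lambda>t. (indicator {0..2*pi} t / (2*pi)) *\<^sub>R g t) = (\<lambda>t. (indicator {0..2*pi} t *\<^sub>R g t) / (2*pi))"
      by (auto simp: indicator_def)
    then show ?thesis by (simp only: integral_divide_zero)
  qed
  also have "integral\<^sup>L lborel (\<lambda>t. indicator {0..2*pi} t *\<^sub>R g t) = I"
  proof -
    have int: "integrable lborel (\<lambda>t. indicator {0..2*pi} t *\<^sub>R g t)"
      by (rule borel_integrable_compact) (auto intro: continuous_on_subset[OF c])
    have "((\<lambda>t. indicator {0..2*pi} t *\<^sub>R g t) has_integral I) UNIV"
    proof -
      have "(\<lambda>t. indicator {0..2*pi} t *\<^sub>R g t) = (\<lambda>t. if t \<in> {0..2*pi} then g t else 0)"
        by (auto simp: indicator_def)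
      then show ?thesis using I has_integral_restrict_UNIV[of "{0..2*pi}" g I] by simp
    qed
    then show ?thesis using has_integral_integral_lborel[OF int] by (metis has_integral_unique)
  qed
  finally show ?thesis .
qed

lemma integral_unif_circle:
  fixes h :: "complex \<Rightarrow> real"
  assumes c: "continuous_on UNIV h" and I: "((\<lambda>t. h (cis t)) has_integral I) {0..2*pi}"
  shows "integral\<^sup>L unif_circle h = I / (2*pi)"
proof -
  have [measurable]: "h \<in> borel_measurable borel" using c by (rule borel_measurable_continuous_onI)
  have "integral\<^sup>L unif_circle h = integral\<^sup>L U0 (\<lambda>t. h (cis t))"
    unfolding unif_circle_def U0_def[symmetric] by (subst integral_distr) auto
  also have "\<dots> = I / (2*pi)"
    by (rule integral_U0[OF _ I]) (intro continuous_on_compose2[OF c] continuous_intros, auto)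
  finally show ?thesis .
qed

lemma int_cos: "(cos has_integral 0) {0..2*pi}"
proof -
  have "(cos has_integral (sin (2*pi) - sin 0)) {0..2*pi}"
    by (intro fundamental_theorem_of_calculus) (auto intro!: derivative_eq_intros simp: has_real_derivative_iff_has_vector_derivative[symmetric])
  then show ?thesis by simp
qed

lemma int_cos2: "((\<lambda>t. (cos t)\<^sup>2) has_integral pi) {0..2*pi}"
proof -
  have "((\<lambda>t. (cos t)\<^sup>2) has_integral ((2*pi/2 + sin (2*(2*pi))/4) - (0/2 + sin (2*0)/4))) {0..2*pi}"
  proof (intro fundamental_theorem_of_calculus)
    fix x :: real assume "x \<in> {0..2*pi}"
    have "((\<lambda>t. t/2 + sin (2*t)/4) has_real_derivative (1/2 + cos (2*x) * 2 / 4)) (at x within {0..2*pi})"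
      by (auto intro!: derivative_eq_intros)
    moreover have "1/2 + cos (2*x) * 2 / 4 = (cos x)\<^sup>2" using cos_double_cos[of x] by (simp add: field_simps)
    ultimately show "((\<lambda>t. t/2 + sin (2*t)/4) has_vector_derivative (cos x)\<^sup>2) (at x within {0..2*pi})"
      by (simp add: has_real_derivative_iff_has_vector_derivative)
  qed simp
  moreover have "sin (2*(2*pi)) = 0" by (metis mult_2 sin_two_pi sin_add cos_two_pi mult_zero_right mult_1 add_0_right mult_zero_left)
  ultimately show ?thesis by simp
qed

lemma E_Re: "integral\<^sup>L unif_circle Re = 0"
  using integral_unif_circle[of Re 0] int_cos by (simp add: continuous_on_Re continuous_on_id)

lemma E_Re2: "integral\<^sup>L unif_circle (\<lambda>z. (Re z)\<^sup>2) = 1/2"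
  using integral_unif_circle[of "\<lambda>z. (Re z)\<^sup>2" pi] int_cos2 by (simp add: continuous_intros)

lemma AE_unit: "AE z in unif_circle. cmod z = 1"
proof -
  show ?thesis unfolding unif_circle_def by (subst AE_distr_iff) auto
qed



lemma std_normal_le:
  assumes A[measurable]: "A \<in> sets borel" and L: "emeasure lborel A = ennreal L" "0 \<le> L"
  shows "measure std_normal_distribution A \<le> L / sqrt (2*pi)"
proof -
  have "emeasure std_normal_distribution A = (\<integral>\<^sup>+x. ennreal (std_normal_density x) * indicator A x \<partial>lborel)"
    by (subst emeasure_density) auto
  also have "\<dots> \<le> (\<integral>\<^sup>+x. ennreal (1 / sqrt (2*pi)) * indicator A x \<partial>lborel)"
  proof (intro nn_integral_mono mult_right_mono)
    fix x
    show "ennreal (std_normal_density x) \<le> ennreal (1 / sqrt (2*pi))"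
      by (intro ennreal_leI) (auto simp: std_normal_density_def intro!: divide_right_mono)
  qed auto
  also have "\<dots> = ennreal (1 / sqrt (2*pi)) * emeasure lborel A"
    by (rule nn_integral_cmult_indicator) simp
  also have "\<dots> = ennreal (L / sqrt (2*pi))" using L by (simp add: ennreal_mult[symmetric] field_simps)
  finally have "emeasure std_normal_distribution A \<le> ennreal (L / sqrt (2*pi))" .
  then show ?thesis using L by (simp add: measure_def enn2real_leI)
qed

lemma std_normal_cont: "isCont (cdf std_normal_distribution) x"
proof -
  have "measure std_normal_distribution {x} \<le> 0 / sqrt (2*pi)"
    by (rule std_normal_le) auto
  interpret real_distribution std_normal_distribution by (rule real_dist_normal_dist)
  show ?thesis using \<open>measure std_normal_distribution {x} \<le> 0 / sqrt (2*pi)\<close>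
    by (simp add: isCont_cdf measure_nonneg antisym)
qed

lemma std_normal_interval:
  assumes "0 \<le> a"
  shows "cdf std_normal_distribution a - cdf std_normal_distribution (-a) \<le> 2 * a / sqrt (2*pi)"
proof -
  interpret real_distribution std_normal_distribution by (rule real_dist_normal_dist)
  have "cdf std_normal_distribution a - cdf std_normal_distribution (-a) = measure std_normal_distribution ({..a} - {..-a})"
    using assms by (simp add: cdf_def finite_measure_Diff subset_eq)
  also have "{..a} - {..-a} = {-a<..a}" by auto
  also have "measure std_normal_distribution {-a<..a} \<le> (2*a) / sqrt (2*pi)"
    by (rule std_normal_le) (use assms in auto)
  finally show ?thesis by simp
qed

lemma gamma_le: "gamma_const \<le> 9/10"
proof -
  define x where "x = pi/8"
  have x: "0 < x" "x < pi/2" by (auto simp: x_def)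
  have s: "sin x > 0" using x by (intro sin_gt_zero) auto
  have c: "cos x > 0" using x by (intro cos_gt_zero) auto
  have s4: "sin (2*x) = sqrt 2 / 2" "cos (2*x) = sqrt 2 / 2"
    by (simp_all add: x_def sin_45 cos_45)
  have "cos x / sin x = (2 * (cos x)\<^sup>2) / (2 * sin x * cos x)"
    using s c by (simp add: power2_eq_square field_simps)
  also have "\<dots> = (1 + cos (2*x)) / sin (2*x)"
    by (simp add: sin_double cos_double_cos)
  also have "\<dots> = 1 + sqrt 2" unfolding s4 by (simp add: field_simps)
  finally have eq: "cos (pi/8) / sin (pi/8) = 1 + sqrt 2" by (simp add: x_def)
  have "sqrt 2 \<le> 14143/10000"
    by (rule real_le_lsqrt) (auto simp: power2_eq_square)
  then have "1 + sqrt 2 \<le> (1 + 3/10 + (3/10)\<^sup>2/2) ^ 3" by (simp add: power_def)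
  also have "\<dots> \<le> exp (3/10) ^ 3"
    by (intro power_mono exp_lower_Taylor_quadratic) auto
  also have "\<dots> = exp (9/10)" by (simp add: exp_of_nat_mult[symmetric])
  finally have "1 + sqrt 2 \<le> exp (9/10)" .
  then have "ln (1 + sqrt 2) \<le> 9/10"
    using ln_le_cancel_iff[of "1 + sqrt 2" "exp (9/10)"] by (simp add: add_pos_nonneg)
  then show ?thesis by (simp add: gamma_const_def eq)
qed



abbreviation Minf :: "(nat \<Rightarrow> complex) measure" where
  "Minf \<equiv> PiM (UNIV::nat set) (\<lambda>_. unif_circle)"

lemma pps: "product_prob_space (\<lambda>_::nat. unif_circle)"
  by (rule product_prob_spaceI) (rule prob_unif_circle)

lemma ps_Minf: "prob_space Minf"
  by (intro prob_space_PiM prob_unif_circle)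

lemma sets_unif[measurable_cong]: "sets unif_circle = sets borel"
  by (simp add: unif_circle_def)

lemma comp_distr: "distr Minf unif_circle (\<lambda>\<omega>. \<omega> i) = unif_circle"
  by (rule distr_PiM_component) (auto intro: prob_unif_circle)

lemma int_unif_Re2: "integrable unif_circle (\<lambda>z. (Re z)\<^sup>2)"
proof -
  interpret prob_space U0 by (rule prob_U0)
  have "integrable U0 (\<lambda>t. (Re (cis t))\<^sup>2)"
    by (rule integrable_const_bound[where B=1]) (auto simp: abs_square_le_1)
  then show ?thesis unfolding unif_circle_def U0_def[symmetric]
    by (subst integrable_distr_eq) auto
qed

lemma indep_Re: "prob_space.indep_vars Minf (\<lambda>_. borel) (\<lambda>i \<omega>. Re (\<omega> i)) UNIV"
proof -
  interpret prob_space Minf by (rule ps_Minf)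
  have "indep_vars (\<lambda>_. unif_circle) (\<lambda>i \<omega>. \<omega> i) UNIV"
  proof (subst indep_vars_iff_distr_eq_PiM)
    show "distr Minf (PiM UNIV (\<lambda>_. unif_circle)) (\<lambda>x. \<lambda>i\<in>UNIV. x i) = PiM UNIV (\<lambda>i. distr Minf unif_circle (\<lambda>\<omega>. \<omega> i))"
      by (simp add: comp_distr restrict_def)
  qed auto
  then show ?thesis by (rule indep_vars_compose2) auto
qed

lemma E_X: "integral\<^sup>L Minf (\<lambda>\<omega>. Re (\<omega> n)) = 0"
proof -
  have "integral\<^sup>L Minf (\<lambda>\<omega>. Re (\<omega> n)) = integral\<^sup>L (distr Minf unif_circle (\<lambda>\<omega>. \<omega> n)) Re"
    by (subst integral_distr) auto
  then show ?thesis by (simp add: comp_distr E_Re)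
qed

lemma E_X2: "integral\<^sup>L Minf (\<lambda>\<omega>. (Re (\<omega> n))\<^sup>2) = 1/2"
proof -
  have "integral\<^sup>L Minf (\<lambda>\<omega>. (Re (\<omega> n))\<^sup>2) = integral\<^sup>L (distr Minf unif_circle (\<lambda>\<omega>. \<omega> n)) (\<lambda>z. (Re z)\<^sup>2)"
    by (subst integral_distr) auto
  then show ?thesis by (simp add: comp_distr E_Re2)
qed

lemma int_X2: "integrable Minf (\<lambda>\<omega>. (Re (\<omega> n))\<^sup>2)"
proof -
  have "integrable (distr Minf unif_circle (\<lambda>\<omega>. \<omega> n)) (\<lambda>z. (Re z)\<^sup>2)"
    by (simp add: comp_distr int_unif_Re2)
  then show ?thesis by (subst (asm) integrable_distr_eq) auto
qed

lemma clt: "weak_conv_m (\<lambda>n. distr Minf borel (\<lambda>x. (\<Sum>i<n. Re (x i)) / sqrt (real n * (sqrt (1/2))\<^sup>2))) std_normal_distribution"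
proof -
  interpret prob_space Minf by (rule ps_Minf)
  show ?thesis
  proof (rule central_limit_theorem_zero_mean[where X="\<lambda>i \<omega>. Re (\<omega> i)" and \<mu>="distr unif_circle borel Re"])
    show "indep_vars (\<lambda>i. borel) (\<lambda>i \<omega>. Re (\<omega> i)) UNIV" by (rule indep_Re)
    show "expectation (\<lambda>\<omega>. Re (\<omega> n)) = 0" for n by (rule E_X)
    show "sqrt (1/2) > (0::real)" by simp
    show "integrable Minf (\<lambda>\<omega>. (Re (\<omega> n))\<^sup>2)" for n by (rule int_X2)
    show "variance (\<lambda>\<omega>. Re (\<omega> n)) = (sqrt (1/2))\<^sup>2" for n
      by (simp add: E_X E_X2)
    show "distr Minf borel (\<lambda>\<omega>. Re (\<omega> n)) = distr unif_circle borel Re" for n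
    proof -
      have "distr unif_circle borel Re = distr (distr Minf unif_circle (\<lambda>\<omega>. \<omega> n)) borel Re"
        by (simp add: comp_distr)
      also have "\<dots> = distr Minf borel (\<lambda>\<omega>. Re (\<omega> n))"
        by (subst distr_distr) (auto simp: comp_def)
      finally show ?thesis by simp
    qed
  qed
qed



lemma fail_small:
  assumes c: "c > 0" and ce: "2 * c / sqrt pi < \<epsilon>"
  shows "eventually (\<lambda>n. measure Minf {\<omega> \<in> space Minf. \<bar>\<Sum>i<n. Re (\<omega> i)\<bar> < c * sqrt (real n)} < \<epsilon>) sequentially"
proof -
  interpret prob_space Minf by (rule ps_Minf)
  define S' where "S' n x = (\<Sum>i<n. Re (x i)) / sqrt (real n * (sqrt (1/2))\<^sup>2)" for n x
  define D where "D n = distr Minf borel (S' n)" for n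
  define a where "a = c * sqrt 2"
  have a: "a \<ge> 0" using c by (simp add: a_def)
  have wc: "weak_conv_m D std_normal_distribution" using clt unfolding D_def S'_def .
  have lim: "(\<lambda>n. cdf (D n) x) \<longlonglongrightarrow> cdf std_normal_distribution x" for x
    using wc std_normal_cont unfolding weak_conv_m_def weak_conv_def by blast
  have "(\<lambda>n. cdf (D n) a - cdf (D n) (-a)) \<longlonglongrightarrow> cdf std_normal_distribution a - cdf std_normal_distribution (-a)"
    by (intro tendsto_diff lim)
  moreover have "cdf std_normal_distribution a - cdf std_normal_distribution (-a) < \<epsilon>"
  proof -
    have "2 * a / sqrt (2*pi) = 2 * c / sqrt pi" by (simp add: a_def real_sqrt_mult)
    then show ?thesis using std_normal_interval[OF a] ce by linarith
  qed
  ultimately have ev: "eventually (\<lambda>n. cdf (D n) a - cdf (D n) (-a) < \<epsilon>) sequentially"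
    by (rule order_tendstoD)
  have S'm[measurable]: "S' n \<in> borel_measurable Minf" for n unfolding S'_def by measurable
  have cdfD: "cdf (D n) x = measure Minf {\<omega> \<in> space Minf. S' n \<omega> \<le> x}" for n x
    unfolding cdf_def D_def by (subst measure_distr) (auto intro!: arg_cong[where f="measure Minf"])
  show ?thesis
    using ev eventually_gt_at_top[of 0]
  proof eventually_elim
    case (elim n)
    let ?A = "{\<omega> \<in> space Minf. S' n \<omega> \<le> a}" and ?B = "{\<omega> \<in> space Minf. S' n \<omega> \<le> -a}"
    have sub: "{\<omega> \<in> space Minf. \<bar>\<Sum>i<n. Re (\<omega> i)\<bar> < c * sqrt (real n)} \<subseteq> ?A - ?B"
    proof safe
      fix \<omega> assume \<omega>: "\<omega> \<in> space Minf" and lt: "\<bar>\<Sum>i<n. Re (\<omega> i)\<bar> < c * sqrt (real n)"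
      have sq: "sqrt (real n * (sqrt (1/2))\<^sup>2) = sqrt (real n) / sqrt 2"
        by (simp add: real_sqrt_mult real_sqrt_divide)
      have pos: "sqrt (real n) / sqrt 2 > 0" using elim by simp
      have "\<bar>S' n \<omega>\<bar> = \<bar>\<Sum>i<n. Re (\<omega> i)\<bar> / (sqrt (real n) / sqrt 2)"
        unfolding S'_def sq using pos by (simp add: abs_mult)
      also have "\<dots> < c * sqrt (real n) / (sqrt (real n) / sqrt 2)"
        using lt pos by (intro divide_strict_right_mono) auto
      also have "\<dots> = a" using elim by (simp add: a_def)
      finally have "\<bar>S' n \<omega>\<bar> < a" .
      then show "S' n \<omega> \<le> a" "S' n \<omega> \<le> - a \<Longrightarrow> False" by auto
    qed
    have "measure Minf {\<omega> \<in> space Minf. \<bar>\<Sum>i<n. Re (\<omega> i)\<bar> < c * sqrt (real n)} \<le> measure Minf (?A - ?B)"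
      by (intro finite_measure_mono sub) measurable
    also have "\<dots> = measure Minf ?A - measure Minf ?B"
      using a by (intro finite_measure_Diff) (auto, measurable)
    also have "\<dots> = cdf (D n) a - cdf (D n) (-a)" by (simp add: cdfD)
    finally show ?case using elim by linarith
  qed
qed



lemma cp_distr: "distr Minf (circle_points n) (\<lambda>\<omega>. restrict \<omega> {..<n}) = circle_points n"
  unfolding circle_points_def
  by (rule product_prob_space.distr_PiM_restrict_finite[OF pps]) auto

lemma rpoly_restrict: "rpoly n (restrict \<omega> {..<n}) w = rpoly n \<omega> w"
  by (simp add: rpoly_def)

theorem mainTheorem15:
  fixes \<epsilon> :: real
  assumes "0 < \<epsilon>" and "\<epsilon> < 1"
  shows "\<forall>\<^sub>F N in sequentially.
     measure (circle_points N)
       {z \<in> space (circle_points N).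
          (SUP w\<in>{w::complex. cmod w = 1}. (cmod (rpoly N z w))\<^sup>2)
            \<ge> exp (gamma_const * sqrt pi * \<epsilon> * sqrt (real N) / 2)}
     \<ge> 1 - \<epsilon>"
proof -
  interpret prob_space Minf by (rule ps_Minf)
  define u :: real where "u = 99/100"
  define c where "c = (95/100) * \<epsilon> * sqrt pi / 2"
  have c: "c > 0" using assms by (simp add: c_def)
  have ce: "2 * c / sqrt pi < \<epsilon>" using assms by (simp add: c_def)
  define d where "d = (sqrt pi * \<epsilon> / 2) * (3/100)"
  have d: "d > 0" using assms by (simp add: d_def)
  have key: "u^2 * c * sqrt x - 2 \<ge> gamma_const * sqrt pi * \<epsilon> * sqrt x / 2" if x: "sqrt x \<ge> 2 / d" for x :: real
  proof -
    have sx: "sqrt x \<ge> 0" using x d by (smt (verit) divide_pos_pos)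
    have "u^2 * c - gamma_const * sqrt pi * \<epsilon> / 2 = (sqrt pi * \<epsilon> / 2) * (u^2 * (95/100) - gamma_const)"
      by (simp add: c_def field_simps)
    also have "\<dots> \<ge> d"
    proof -
      have "u^2 * (95/100) - gamma_const \<ge> 3/100" using gamma_le by (simp add: u_def power2_eq_square)
      then show ?thesis unfolding d_def using assms by (intro mult_left_mono) auto
    qed
    finally have "(u^2 * c - gamma_const * sqrt pi * \<epsilon> / 2) * sqrt x \<ge> d * sqrt x"
      using sx by (intro mult_right_mono) auto
    moreover have "d * sqrt x \<ge> 2" using x d by (simp add: field_simps)
    ultimately show ?thesis by (simp add: algebra_simps)
  qed
  have ev2: "eventually (\<lambda>n. sqrt (real n) \<ge> 2 / d) sequentially"
    using eventually_ge_at_top[of "nat \<lceil>(2/d)^2\<rceil>"]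
  proof eventually_elim
    case (elim n)
    then have "real n \<ge> (2/d)^2" by linarith
    then have "sqrt (real n) \<ge> sqrt ((2/d)^2)" by (rule real_sqrt_le_mono)
    then show ?case using d by simp
  qed
  show ?thesis
    using fail_small[OF c ce] ev2
  proof eventually_elim
    case (elim n)
    note outer = elim
    let ?thr = "exp (gamma_const * sqrt pi * \<epsilon> * sqrt (real n) / 2)"
    define A where "A = {z \<in> space (circle_points n). ?thr \<le> (SUP w\<in>{w::complex. cmod w = 1}. (cmod (rpoly n z w))\<^sup>2)}"
    define B where "B = {\<omega> \<in> space Minf. \<bar>\<Sum>i<n. Re (\<omega> i)\<bar> < c * sqrt (real n)}"
    have Asets: "A \<in> sets (circle_points n)" unfolding A_def by (rule sets_event)
    have Rm: "(\<lambda>\<omega>. restrict \<omega> {..<n}) \<in> measurable Minf (circle_points n)"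
      unfolding circle_points_def by (rule measurable_restrict_subset) auto
    define E where "E = (\<lambda>\<omega>. restrict \<omega> {..<n}) -` A \<inter> space Minf"
    have Esets: "E \<in> sets Minf" unfolding E_def using Rm Asets by (rule measurable_sets)
    have mA: "measure (circle_points n) A = measure Minf E"
    proof -
      have "measure (circle_points n) A = measure (distr Minf (circle_points n) (\<lambda>\<omega>. restrict \<omega> {..<n})) A"
        by (simp only: cp_distr)
      also have "\<dots> = measure Minf E" unfolding E_def by (rule measure_distr[OF Rm Asets])
      finally show ?thesis .
    qed
    have Bsets: "B \<in> sets Minf" unfolding B_def by measurable
    have AEu: "AE \<omega> in Minf. \<forall>i\<in>{..<n}. cmod (\<omega> i) = 1"
      by (intro AE_finite_allI AE_PiM_component prob_unif_circle AE_unit) auto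
    have "measure Minf (space Minf - B) \<le> measure Minf E"
    proof (rule finite_measure_mono_AE[OF _ Esets])
      show "AE \<omega> in Minf. \<omega> \<in> space Minf - B \<longrightarrow> \<omega> \<in> E"
        using AEu
      proof eventually_elim
        case (elim \<omega>)
        show ?case
        proof
          assume \<omega>: "\<omega> \<in> space Minf - B"
          then have ge: "\<bar>\<Sum>i<n. Re (\<omega> i)\<bar> \<ge> c * sqrt (real n)" by (auto simp: B_def)
          have "?thr \<le> exp (u^2 * (c * sqrt (real n)) - 2)"
            using key[OF outer(2)] by (simp add: mult.assoc)
          also have "\<dots> \<le> exp (u^2 * \<bar>\<Sum>i<n. Re (\<omega> i)\<bar> - 2)"
            using ge by (simp add: mult_left_mono)
          also have "\<dots> \<le> (SUP w\<in>{w::complex. cmod w = 1}. (cmod (rpoly n \<omega> w))\<^sup>2)"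
            by (rule sup_bound) (use elim(1) in \<open>auto simp: u_def\<close>)
          finally have "?thr \<le> (SUP w\<in>{w::complex. cmod w = 1}. (cmod (rpoly n (restrict \<omega> {..<n}) w))\<^sup>2)"
            by (simp add: rpoly_restrict)
          moreover have "restrict \<omega> {..<n} \<in> space (circle_points n)"
            using measurable_space[OF Rm] \<omega> by auto
          ultimately show "\<omega> \<in> E" using \<omega> by (auto simp: E_def A_def)
        qed
      qed
    qed
    also have "measure Minf (space Minf - B) = 1 - measure Minf B"
      using Bsets by (rule prob_compl)
    finally have "1 - measure Minf B \<le> measure (circle_points n) A" using mA by simp
    then show ?case using elim(1) unfolding A_def B_def by linarith
  qed
qed


end
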